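(* Let $t \ge 2$ be an integer and let $M$ be a matroid with the $(t,2t)$-property. If $M$ has a $t$-echidna $(S_1,\ldots, S_n)$ with $n\geq 4t-3$, then there exist $m\ge n$ and pairs $S_{n+1},\dots,S_m$ such that $(S_1,\ldots,S_n,S_{n+1},\dots,S_m)$ is a partition of $E(M)$ that is both a $t$-echidna and a $t$-coechidna of $M$.
   Context: A matroid $M$ has the $(t,2t)$-property if every $t$-element subset of $E(M)$ is contained in both a $2t$-element circuit and a $2t$-element cocircuit of $M$. A $t$-echidna of order $n$ of $M$ is a partition $(S_1,\ldots,S_n)$ of a subset of $E(M)$ such that $|S_i|=2$ for all $i\in\{1,\dots,n\}$, and $\bigcup_{i\in I}S_i$ is a circuit of $M$ for every $I\subseteq\{1,\dots,n\}$ with $|I|=t$. A $t$-coechidna of $M$ is a $t$-echidna of the dual matroid $M^*$. *)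

theory Defs
  imports Main
begin

definition matroid :: "'a set \<Rightarrow> ('a set \<Rightarrow> bool) \<Rightarrow> bool" where
  "matroid E indep \<longleftrightarrow>
     finite E \<and>
     (\<forall>X. indep X \<longrightarrow> X \<subseteq> E) \<and>
     indep {} \<and>
     (\<forall>X Y. indep Y \<and> X \<subseteq> Y \<longrightarrow> indep X) \<and>
     (\<forall>X Y. indep X \<and> indep Y \<and> card X < card Y \<longrightarrow>
        (\<exists>y \<in> Y - X. indep (insert y X)))"

definition basis :: "'a set \<Rightarrow> ('a set \<Rightarrow> bool) \<Rightarrow> 'a set \<Rightarrow> bool" where
  "basis E indep B \<longleftrightarrow> indep B \<and> (\<forall>X. indep X \<and> B \<subseteq> X \<longrightarrow> X = B)"

definition circuit :: "'a set \<Rightarrow> ('a set \<Rightarrow> bool) \<Rightarrow> 'a set \<Rightarrow> bool" where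
  "circuit E indep C \<longleftrightarrow> C \<subseteq> E \<and> \<not> indep C \<and> (\<forall>x \<in> C. indep (C - {x}))"

definition dual_indep :: "'a set \<Rightarrow> ('a set \<Rightarrow> bool) \<Rightarrow> 'a set \<Rightarrow> bool" where
  "dual_indep E indep X \<longleftrightarrow> X \<subseteq> E \<and> (\<exists>B. basis E indep B \<and> X \<inter> B = {})"

definition cocircuit :: "'a set \<Rightarrow> ('a set \<Rightarrow> bool) \<Rightarrow> 'a set \<Rightarrow> bool" where
  "cocircuit E indep C \<longleftrightarrow> circuit E (dual_indep E indep) C"

definition t2t_property :: "nat \<Rightarrow> 'a set \<Rightarrow> ('a set \<Rightarrow> bool) \<Rightarrow> bool" where
  "t2t_property t E indep \<longleftrightarrow>
     (\<forall>X. X \<subseteq> E \<and> card X = t \<longrightarrow>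
        (\<exists>C. circuit E indep C \<and> card C = 2 * t \<and> X \<subseteq> C) \<and>
        (\<exists>D. cocircuit E indep D \<and> card D = 2 * t \<and> X \<subseteq> D))"

definition pair_partition :: "'a set \<Rightarrow> (nat \<Rightarrow> 'a set) \<Rightarrow> nat \<Rightarrow> bool" where
  "pair_partition E S n \<longleftrightarrow>
     (\<forall>i \<in> {1..n}. S i \<subseteq> E \<and> card (S i) = 2) \<and>
     (\<forall>i \<in> {1..n}. \<forall>j \<in> {1..n}. i \<noteq> j \<longrightarrow> S i \<inter> S j = {})"

definition echidna_wrt :: "('a set \<Rightarrow> bool) \<Rightarrow> nat \<Rightarrow> 'a set \<Rightarrow> (nat \<Rightarrow> 'a set) \<Rightarrow> nat \<Rightarrow> bool" where
  "echidna_wrt circ t E S n \<longleftrightarrow>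
     pair_partition E S n \<and>
     (\<forall>I. I \<subseteq> {1..n} \<and> card I = t \<longrightarrow> circ (\<Union>i\<in>I. S i))"

definition echidna :: "nat \<Rightarrow> 'a set \<Rightarrow> ('a set \<Rightarrow> bool) \<Rightarrow> (nat \<Rightarrow> 'a set) \<Rightarrow> nat \<Rightarrow> bool" where
  "echidna t E indep S n \<longleftrightarrow> echidna_wrt (circuit E indep) t E S n"

definition coechidna :: "nat \<Rightarrow> 'a set \<Rightarrow> ('a set \<Rightarrow> bool) \<Rightarrow> (nat \<Rightarrow> 'a set) \<Rightarrow> nat \<Rightarrow> bool" where
  "coechidna t E indep S n \<longleftrightarrow> echidna t E (dual_indep E indep) S n"

end

theory Submission
  imports Defs
begin


lemma m_fin: "matroid E indep \<Longrightarrow> finite E"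
  by (simp add: matroid_def)
lemma m_sub: "matroid E indep \<Longrightarrow> indep X \<Longrightarrow> X \<subseteq> E"
  by (simp add: matroid_def)
lemma m_down: "matroid E indep \<Longrightarrow> indep Y \<Longrightarrow> X \<subseteq> Y \<Longrightarrow> indep X"
  unfolding matroid_def by (elim conjE) (rule mp, erule allE, erule allE, assumption, rule conjI)
lemma m_aug: "matroid E indep \<Longrightarrow> indep X \<Longrightarrow> indep Y \<Longrightarrow> card X < card Y \<Longrightarrow> \<exists>y \<in> Y - X. indep (insert y X)"
  unfolding matroid_def by (elim conjE) (rule mp, erule allE, erule allE, assumption, intro conjI)

lemma indep_sub: "matroid E indep \<Longrightarrow> indep X \<Longrightarrow> X \<subseteq> E \<and> finite X"
  using m_fin m_sub finite_subset by metis

lemma basis_card_ge: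
  assumes m: "matroid E indep" and b: "basis E indep B" and x: "indep X"
  shows "card X \<le> card B"
proof (rule ccontr)
  assume "\<not> card X \<le> card B"
  hence lt: "card B < card X" by simp
  have iB: "indep B" using b unfolding basis_def by (elim conjE)
  obtain y where y: "y \<in> X - B" "indep (insert y B)" using m_aug[OF m iB x lt] by (elim bexE)
  have mx: "\<forall>X. indep X \<and> B \<subseteq> X \<longrightarrow> X = B" using b unfolding basis_def by (elim conjE)
  have "insert y B = B" using mx y(2) by auto
  thus False using y(1) by auto
qed

lemma max_indep_in:
  assumes m: "matroid E indep" and Y: "Y \<subseteq> E" and X: "indep X" "X \<subseteq> Y"
  shows "\<exists>Z. indep Z \<and> X \<subseteq> Z \<and> Z \<subseteq> Y \<and> (\<forall>W. indep W \<and> W \<subseteq> Y \<longrightarrow> card W \<le> card Z)"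
proof -
  have fY: "finite Y" using m_fin[OF m] Y finite_subset by metis
  let ?F = "\<lambda>Z. indep Z \<and> X \<subseteq> Z \<and> Z \<subseteq> Y"
  have bnd: "\<forall>Z. ?F Z \<longrightarrow> card Z < card Y + 1"
  proof (intro allI impI)
    fix Z assume "?F Z"
    hence "card Z \<le> card Y" using fY card_mono by metis
    thus "card Z < card Y + 1" by simp
  qed
  obtain Z where Z: "?F Z" and mx: "\<forall>Z'. ?F Z' \<longrightarrow> card Z' \<le> card Z"
    using Lattices_Big.ex_has_greatest_nat[of ?F X card "card Y + 1", OF _ bnd] X by auto
  have "\<forall>W. indep W \<and> W \<subseteq> Y \<longrightarrow> card W \<le> card Z"
  proof (intro allI impI, rule ccontr)
    fix W assume W: "indep W \<and> W \<subseteq> Y" and "\<not> card W \<le> card Z"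
    hence lt: "card Z < card W" by simp
    have iZ: "indep Z" using Z by simp
    have iW: "indep W" using W by simp
    obtain y where y: "y \<in> W - Z" "indep (insert y Z)" using m_aug[OF m iZ iW lt] by (elim bexE)
    have "finite Z" using Z fY finite_subset by metis
    hence "card (insert y Z) = card Z + 1" using y by simp
    moreover have "?F (insert y Z)" using y Z W by auto
    ultimately show False using mx by fastforce
  qed
  thus ?thesis using Z by auto
qed

lemma card_basis:
  assumes m: "matroid E indep" and b: "basis E indep B" and z: "indep Z" and c: "card B \<le> card Z"
  shows "basis E indep Z"
  unfolding basis_def
proof (intro conjI z allI impI)
  fix W assume W: "indep W \<and> Z \<subseteq> W"
  have "card W \<le> card B" using basis_card_ge[OF m b] W by simp
  hence c2: "card Z = card W" using c W indep_sub[OF m] card_mono by (meson le_antisym le_trans)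
  have "finite W" using indep_sub[OF m] W by simp
  hence "Z = W" using W c2 card_subset_eq by blast
  thus "W = Z" by simp
qed

lemma orth:
  assumes m: "matroid E indep" and C: "circuit E indep C"
    and D: "circuit E (dual_indep E indep) D"
  shows "card (C \<inter> D) \<noteq> 1"
proof
  assume c1: "card (C \<inter> D) = 1"
  have "\<exists>x. C \<inter> D = {x}" using c1 card_1_singleton_iff[of "C \<inter> D"] by simp
  then obtain x where x: "C \<inter> D = {x}" by (elim exE)
  have DE: "D \<subseteq> E" and nd: "\<not> dual_indep E indep D"
    and dall: "\<forall>y\<in>D. dual_indep E indep (D - {y})" using D unfolding circuit_def by simp_all
  have dx: "dual_indep E indep (D - {x})" using dall x by auto
  have allB: "\<And>B. basis E indep B \<Longrightarrow> B \<inter> D \<noteq> {}"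
  proof
    fix B assume "basis E indep B" "B \<inter> D = {}"
    hence "dual_indep E indep D" unfolding dual_indep_def using DE by (auto simp: Int_commute)
    thus False using nd by simp
  qed
  obtain B where B: "basis E indep B" "(D - {x}) \<inter> B = {}" using dx unfolding dual_indep_def by auto
  have CE: "C \<subseteq> E" and nC: "\<not> indep C" and call: "\<forall>y\<in>C. indep (C - {y})"
    using C unfolding circuit_def by simp_all
  have iC: "indep (C - {x})" using call x by auto
  have iB: "indep B" using B unfolding basis_def by simp
  have YE: "(C - {x}) \<union> B \<subseteq> E" using CE m_sub[OF m iB] by auto
  obtain Z where Z: "indep Z" "C - {x} \<subseteq> Z" "Z \<subseteq> (C - {x}) \<union> B"
     and mx: "\<forall>W. indep W \<and> W \<subseteq> (C - {x}) \<union> B \<longrightarrow> card W \<le> card Z"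
    using max_indep_in[OF m YE iC] by auto
  have "card B \<le> card Z" using mx iB by auto
  hence "basis E indep Z" using card_basis[OF m B(1) Z(1)] by simp
  hence "Z \<inter> D \<noteq> {}" using allB by simp
  moreover have "Z \<inter> D \<subseteq> {x}" using Z(3) x B(2) by auto
  ultimately have "x \<in> Z" by auto
  hence "C \<subseteq> Z" using Z(2) by auto
  hence "indep C" using m_down[OF m Z(1)] by simp
  thus False using nC by simp
qed


lemma pp_fin: "pair_partition E S n \<Longrightarrow> i \<in> {1..n} \<Longrightarrow> finite (S i) \<and> card (S i) = 2 \<and> S i \<subseteq> E"
  unfolding pair_partition_def by (metis card.infinite zero_neq_numeral)

lemma pp_disj: "pair_partition E S n \<Longrightarrow> i \<in> {1..n} \<Longrightarrow> j \<in> {1..n} \<Longrightarrow> i \<noteq> j \<Longrightarrow> S i \<inter> S j = {}"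
  unfolding pair_partition_def by blast

lemma pp_union_card:
  assumes pp: "pair_partition E S n" and I: "I \<subseteq> {1..n}"
  shows "card (\<Union>i\<in>I. S i) = 2 * card I"
proof -
  have fI: "finite I" using I finite_subset by blast
  have "card (\<Union>i\<in>I. S i) = (\<Sum>i\<in>I. card (S i))"
  proof (rule card_UN_disjoint[OF fI])
    show "\<forall>i\<in>I. finite (S i)" using pp_fin[OF pp] I by blast
    show "\<forall>i\<in>I. \<forall>j\<in>I. i \<noteq> j \<longrightarrow> S i \<inter> S j = {}" using pp_disj[OF pp] I by blast
  qed
  also have "\<dots> = (\<Sum>i\<in>I. 2)" using pp_fin[OF pp] I by (meson subsetD sum.cong)
  finally show ?thesis by simp
qed

lemma count_meet:
  assumes pp: "pair_partition E S n" and A: "finite A" and K: "K \<subseteq> {1..n}"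
    and meet: "\<forall>j\<in>K. S j \<inter> A \<noteq> {}"
  shows "card K \<le> card A"
proof -
  let ?g = "\<lambda>j. SOME a. a \<in> S j \<inter> A"
  have g: "\<forall>j\<in>K. ?g j \<in> S j \<inter> A"
  proof
    fix j assume "j \<in> K"
    then obtain a where "a \<in> S j \<inter> A" using meet by blast
    thus "?g j \<in> S j \<inter> A" by (rule someI)
  qed
  have inj: "inj_on ?g K"
  proof (rule inj_onI)
    fix i j assume ij: "i \<in> K" "j \<in> K" "?g i = ?g j"
    show "i = j"
    proof (rule ccontr)
      assume ne: "i \<noteq> j"
      have "i \<in> {1..n}" "j \<in> {1..n}" using ij(1,2) K by auto
      hence "S i \<inter> S j = {}" using pp_disj[OF pp _ _ ne] by simp
      moreover have "?g i \<in> S i" "?g j \<in> S j" using g ij(1,2) by auto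
      ultimately show False using ij(3) by auto
    qed
  qed
  have sub: "?g ` K \<subseteq> A" using g by auto
  show ?thesis by (rule card_inj_on_le[OF inj sub A])
qed

lemma not_one:
  assumes pp: "pair_partition E S n"
    and echQ: "echidna_wrt Q t E S n"
    and orth: "\<forall>C D. P C \<longrightarrow> Q D \<longrightarrow> card (C \<inter> D) \<noteq> 1"
    and PC: "P C" and i: "i \<in> {1..n}" and J: "J \<subseteq> {1..n} - {i}" and cJ: "card J = t - 1"
    and t: "t \<ge> 1" and dis: "\<forall>j\<in>J. C \<inter> S j = {}"
  shows "card (C \<inter> S i) \<noteq> 1"
proof -
  have fJ: "finite J" using J finite_subset by blast
  have "i \<notin> J" using J by blast
  hence "card (insert i J) = t" using fJ J cJ t by simp
  moreover have "insert i J \<subseteq> {1..n}" using J i by blast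
  ultimately have "Q (\<Union>j\<in>insert i J. S j)" using echQ unfolding echidna_wrt_def by blast
  moreover have "C \<inter> (\<Union>j\<in>insert i J. S j) = C \<inter> S i" using dis by blast
  ultimately show ?thesis using orth PC by metis
qed

lemma absorb:
  assumes pp: "pair_partition E S n"
    and echQ: "echidna_wrt Q t E S n"
    and orth: "\<forall>C D. P C \<longrightarrow> Q D \<longrightarrow> card (C \<inter> D) \<noteq> 1"
    and PC: "P C" and fC: "finite C" and cC: "card C = 2 * t"
    and I: "I \<subseteq> {1..n}" and X: "X \<subseteq> C" and cX: "card X = t"
    and Xout: "\<forall>j\<in>{1..n} - I. X \<inter> S j = {}"
    and i: "i \<in> I" and Xi: "X \<inter> S i \<noteq> {}"
    and nbig: "card I + 2 * t - 1 \<le> n" and t: "t \<ge> 1"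
  shows "S i \<subseteq> C"
proof -
  let ?K = "{j \<in> {1..n} - I. S j \<inter> C \<noteq> {}}"
  have "\<forall>j\<in>?K. S j \<inter> (C - X) \<noteq> {}" using Xout by blast
  hence cK: "card ?K \<le> card (C - X)" using count_meet[OF pp, of "C - X" ?K] fC by blast
  have "card (C - X) = t" using fC X cX cC by (simp add: card_Diff_subset finite_subset)
  let ?L = "{j \<in> {1..n} - I. C \<inter> S j = {}}"
  have Leq: "?L = ({1..n} - I) - ?K" by blast
  have fK: "finite ?K" by (rule finite_subset[of _ "{1..n}"]) auto
  have sK: "?K \<subseteq> {1..n} - I" by blast
  have "card ?L = card ({1..n} - I) - card ?K" unfolding Leq by (rule card_Diff_subset[OF fK sK])
  moreover have "card ({1..n} - I) = n - card I" using I by (simp add: card_Diff_subset finite_subset)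
  ultimately have "card ?L \<ge> t - 1" using cK \<open>card (C - X) = t\<close> nbig by linarith
  then obtain J where J: "J \<subseteq> ?L" "card J = t - 1"
    by (meson obtain_subset_with_card_n)
  have "J \<subseteq> {1..n} - {i}" using J i by blast
  hence c1: "card (C \<inter> S i) \<noteq> 1"
    using not_one[OF pp echQ orth PC _ _ J(2) t] J i I by blast
  have iin: "i \<in> {1..n}" using i I by blast
  have fS: "finite (S i)" "card (S i) = 2" using pp_fin[OF pp iin] by auto
  have "C \<inter> S i \<noteq> {}" using X Xi by blast
  hence "card (C \<inter> S i) \<noteq> 0" using fS by simp
  moreover have "card (C \<inter> S i) \<le> 2" using fS by (metis card_mono inf_le2)
  ultimately have "card (C \<inter> S i) = card (S i)" using c1 fS by linarith
  hence "C \<inter> S i = S i" using fS by (meson card_subset_eq inf_le2)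
  thus ?thesis by blast
qed


lemma some_mem: "pair_partition E S n \<Longrightarrow> i \<in> {1..n} \<Longrightarrow> (SOME a. a \<in> S i) \<in> S i"
proof -
  assume pp: "pair_partition E S n" and i: "i \<in> {1..n}"
  have "card (S i) = 2" using pp_fin[OF pp i] by blast
  hence "S i \<noteq> {}" by force
  thus ?thesis by (simp add: some_in_eq)
qed

lemma inj_pick:
  assumes pp: "pair_partition E S n" and I: "I \<subseteq> {1..n}" and xS: "\<forall>i\<in>I. x i \<in> S i"
  shows "inj_on x I"
proof (rule inj_onI)
  fix i j assume ij: "i \<in> I" "j \<in> I" "x i = x j"
  show "i = j"
  proof (rule ccontr)
    assume "i \<noteq> j"
    hence "S i \<inter> S j = {}" using pp_disj[OF pp] ij I by blast
    thus False using xS ij by (metis disjoint_iff)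
  qed
qed

lemma step1:
  assumes echP: "echidna_wrt P t E S n"
    and orth: "\<forall>C D. Q C \<longrightarrow> P D \<longrightarrow> card (C \<inter> D) \<noteq> 1"
    and propQ: "\<forall>X. X \<subseteq> E \<and> card X = t \<longrightarrow> (\<exists>D. Q D \<and> card D = 2*t \<and> X \<subseteq> D)"
    and Qfin: "\<forall>D. Q D \<longrightarrow> finite D"
    and nbig: "3*t - 1 \<le> n" and t: "t \<ge> 1"
  shows "echidna_wrt Q t E S n"
proof -
  have pp: "pair_partition E S n" using echP unfolding echidna_wrt_def by simp
  define x where "x = (\<lambda>i. SOME a. a \<in> S i)"
  have xS: "\<And>i. i \<in> {1..n} \<Longrightarrow> x i \<in> S i" unfolding x_def by (rule some_mem[OF pp])
  have "\<forall>I. I \<subseteq> {1..n} \<and> card I = t \<longrightarrow> Q (\<Union>i\<in>I. S i)"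
  proof (intro allI impI)
    fix I assume I': "I \<subseteq> {1..n} \<and> card I = t"
    have I: "I \<subseteq> {1..n}" and cI: "card I = t" using I' by simp_all
    have xSI: "\<forall>i\<in>I. x i \<in> S i" using xS I by auto
    have inj: "inj_on x I" by (rule inj_pick[OF pp I xSI])
    have cX: "card (x ` I) = t" using card_image[OF inj] cI by simp
    have XE: "x ` I \<subseteq> E"
    proof
      fix y assume "y \<in> x ` I"
      then obtain i where i: "i \<in> I" "y = x i" by auto
      have "i \<in> {1..n}" using i I by auto
      thus "y \<in> E" using pp_fin[OF pp] xS i by auto
    qed
    have "\<exists>D. Q D \<and> card D = 2*t \<and> x ` I \<subseteq> D" using propQ XE cX by simp
    then obtain D where D: "Q D" "card D = 2*t" "x ` I \<subseteq> D" by auto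
    have fD: "finite D" using Qfin D(1) by simp
    have Xout: "\<forall>j\<in>{1..n} - I. x ` I \<inter> S j = {}"
    proof (intro ballI)
      fix j assume j: "j \<in> {1..n} - I"
      show "x ` I \<inter> S j = {}"
      proof (rule ccontr)
        assume "x ` I \<inter> S j \<noteq> {}"
        then obtain k where k: "k \<in> I" "x k \<in> S j" by auto
        have kn: "k \<in> {1..n}" using k I by auto
        have kj: "k \<noteq> j" using k j by auto
        have "S k \<inter> S j = {}" using pp_disj[OF pp kn _ kj] j by auto
        thus False using xSI k by auto
      qed
    qed
    have nb: "card I + 2*t - 1 \<le> n" using cI nbig by simp
    have sub: "\<forall>i\<in>I. S i \<subseteq> D"
    proof
      fix i assume i: "i \<in> I"
      have Xi: "x ` I \<inter> S i \<noteq> {}" using xSI i by auto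
      show "S i \<subseteq> D" by (rule absorb[OF pp echP orth D(1) fD D(2) I D(3) cX Xout i Xi nb t])
    qed
    hence s: "(\<Union>i\<in>I. S i) \<subseteq> D" by auto
    have "card (\<Union>i\<in>I. S i) = card D" using pp_union_card[OF pp I] cI D(2) by simp
    hence "(\<Union>i\<in>I. S i) = D" using card_subset_eq[OF fD s] by simp
    thus "Q (\<Union>i\<in>I. S i)" using D(1) by simp
  qed
  thus ?thesis using pp unfolding echidna_wrt_def by simp
qed

lemma cardX:
  assumes pp: "pair_partition E S n" and I: "I \<subseteq> {1..n}" and cI: "card I = t - 1"
    and e: "e \<notin> (\<Union>i\<in>{1..n}. S i)" and t: "t \<ge> 1" and xS: "\<forall>i\<in>I. x i \<in> S i"
  shows "card (insert e (x ` I)) = t"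
proof -
  have inj: "inj_on x I" using inj_pick[OF pp I xS] .
  have "e \<notin> x ` I" using e xS I by blast
  moreover have "finite I" using I finite_subset by blast
  ultimately show ?thesis using card_image[OF inj] cI t by simp
qed

lemma shape:
  assumes pp: "pair_partition E S n"
    and echQ: "echidna_wrt Q t E S n"
    and orth: "\<forall>C D. P C \<longrightarrow> Q D \<longrightarrow> card (C \<inter> D) \<noteq> 1"
    and PC: "P C" and fC: "finite C" and cC: "card C = 2 * t"
    and I: "I \<subseteq> {1..n}" and cI: "card I = t - 1"
    and e: "e \<notin> (\<Union>i\<in>{1..n}. S i)"
    and X: "insert e (x ` I) \<subseteq> C" and xS: "\<forall>i\<in>I. x i \<in> S i"
    and nbig: "3*t - 2 \<le> n" and t: "t \<ge> 2"
  shows "\<exists>f. C = insert e (insert f (\<Union>i\<in>I. S i)) \<and> f \<noteq> e \<and> f \<notin> (\<Union>i\<in>{1..n}. S i)"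
proof -
  have t1: "t \<ge> 1" using t by simp
  have eS: "\<And>j. j \<in> {1..n} \<Longrightarrow> e \<notin> S j" using e by auto
  have dj: "\<And>i j. i \<in> {1..n} \<Longrightarrow> j \<in> {1..n} \<Longrightarrow> i \<noteq> j \<Longrightarrow> S i \<inter> S j = {}"
    by (rule pp_disj[OF pp])
  have cX: "card (insert e (x ` I)) = t" by (rule cardX[OF pp I cI e t1 xS])
  have Xout: "\<forall>j\<in>{1..n} - I. insert e (x ` I) \<inter> S j = {}"
  proof (intro ballI)
    fix j assume j: "j \<in> {1..n} - I"
    have jn: "j \<in> {1..n}" and jI: "j \<notin> I" using j by auto
    show "insert e (x ` I) \<inter> S j = {}"
    proof (rule ccontr)
      assume ne: "insert e (x ` I) \<inter> S j \<noteq> {}"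
      have "e \<notin> S j" by (rule eS[OF jn])
      then obtain k where k: "k \<in> I" "x k \<in> S j" using ne by auto
      have kn: "k \<in> {1..n}" using k I by auto
      have kj: "k \<noteq> j" using k jI by auto
      have "S k \<inter> S j = {}" by (rule dj[OF kn jn kj])
      thus False using xS k by auto
    qed
  qed
  have nb: "card I + 2*t - 1 \<le> n" using cI nbig t by simp
  have sub: "\<forall>i\<in>I. S i \<subseteq> C"
  proof
    fix i assume i: "i \<in> I"
    have Xi: "insert e (x ` I) \<inter> S i \<noteq> {}" using xS i by auto
    show "S i \<subseteq> C" by (rule absorb[OF pp echQ orth PC fC cC I X cX Xout i Xi nb t1])
  qed
  define V where "V = (\<Union>i\<in>I. S i)"
  define U where "U = insert e V"
  have VC: "V \<subseteq> C" unfolding V_def using sub by auto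
  have UC: "U \<subseteq> C" unfolding U_def using VC X by auto
  have fV: "finite V" using fC VC finite_subset by auto
  have eV: "e \<notin> V" unfolding V_def using e I by auto
  have cV: "card V = 2 * (t - 1)" unfolding V_def using pp_union_card[OF pp I] cI by simp
  have cU: "card U = 2*t - 1" unfolding U_def using cV eV fV t by simp
  have fU: "finite U" unfolding U_def using fV by simp
  have "card (C - U) = card C - card U" by (rule card_Diff_subset[OF fU UC])
  hence "card (C - U) = 1" using cC cU t by simp
  hence "\<exists>f. C - U = {f}" using card_1_singleton_iff[of "C - U"] by simp
  then obtain f where f: "C - U = {f}" by (elim exE)
  have Ceq: "C = insert f U" using f UC by auto
  have fnU: "f \<notin> U" using f by auto
  have fe: "f \<noteq> e" and fV': "f \<notin> V" using fnU unfolding U_def by auto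
  have "f \<notin> (\<Union>i\<in>{1..n}. S i)"
  proof
    assume "f \<in> (\<Union>i\<in>{1..n}. S i)"
    then obtain j where j: "j \<in> {1..n}" "f \<in> S j" by auto
    have jI: "j \<notin> I" using fV' j unfolding V_def by auto
    have ej: "e \<notin> S j" by (rule eS[OF j(1)])
    have Vj: "V \<inter> S j = {}"
    proof -
      have "\<And>i. i \<in> I \<Longrightarrow> S i \<inter> S j = {}"
      proof -
        fix i assume i: "i \<in> I"
        have "i \<in> {1..n}" "i \<noteq> j" using i I jI by auto
        thus "S i \<inter> S j = {}" using dj j(1) by simp
      qed
      thus ?thesis unfolding V_def by auto
    qed
    have CSj: "C \<inter> S j = {f}" unfolding Ceq U_def using ej Vj j(2) by auto
    define L where "L = {1..n} - insert j I"
    have sL: "insert j I \<subseteq> {1..n}" using I j by auto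
    have fI: "finite I" using I finite_subset by auto
    have cjI: "card (insert j I) = t" using jI cI t fI by simp
    have "card L = n - t" unfolding L_def using card_Diff_subset[OF finite_subset[OF sL] sL] cjI by simp
    hence "card L \<ge> t - 1" using nbig t by simp
    then obtain J where J: "J \<subseteq> L" "card J = t - 1" by (meson obtain_subset_with_card_n)
    have dis: "\<forall>k\<in>J. C \<inter> S k = {}"
    proof
      fix k assume k: "k \<in> J"
      have kn: "k \<in> {1..n}" and kj: "k \<noteq> j" and kI: "k \<notin> I" using k J unfolding L_def by auto
      have "e \<notin> S k" by (rule eS[OF kn])
      moreover have "V \<inter> S k = {}"
      proof -
        have "\<And>i. i \<in> I \<Longrightarrow> S i \<inter> S k = {}"
        proof -
          fix i assume i: "i \<in> I"
          have "i \<in> {1..n}" "i \<noteq> k" using i I kI by auto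
          thus "S i \<inter> S k = {}" using dj kn by simp
        qed
        thus ?thesis unfolding V_def by auto
      qed
      moreover have "f \<notin> S k" using dj[OF j(1) kn] kj j(2) by auto
      ultimately show "C \<inter> S k = {}" unfolding Ceq U_def by auto
    qed
    have Jj: "J \<subseteq> {1..n} - {j}" using J unfolding L_def by auto
    have "card (C \<inter> S j) \<noteq> 1" by (rule not_one[OF pp echQ orth PC j(1) Jj J(2) t1 dis])
    thus False using CSj by simp
  qed
  thus ?thesis using Ceq fe unfolding U_def V_def by auto
qed

lemma matching:
  assumes pp: "pair_partition E S n"
    and orth: "\<forall>C D. P C \<longrightarrow> Q D \<longrightarrow> card (C \<inter> D) \<noteq> 1"
    and I1: "I1 \<subseteq> {1..n}" and I2: "I2 \<subseteq> {1..n}" and dI: "I1 \<inter> I2 = {}"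
    and e: "e \<notin> (\<Union>i\<in>{1..n}. S i)" and f: "f \<notin> (\<Union>i\<in>{1..n}. S i)" and g: "g \<notin> (\<Union>i\<in>{1..n}. S i)"
    and fe: "f \<noteq> e" and ge: "g \<noteq> e"
    and P1: "P (insert e (insert f (\<Union>i\<in>I1. S i)))"
    and Q2: "Q (insert e (insert g (\<Union>i\<in>I2. S i)))"
  shows "f = g"
proof (rule ccontr)
  assume fg: "f \<noteq> g"
  have d: "(\<Union>i\<in>I1. S i) \<inter> (\<Union>i\<in>I2. S i) = {}"
  proof -
    have "\<And>i j. i \<in> I1 \<Longrightarrow> j \<in> I2 \<Longrightarrow> S i \<inter> S j = {}"
      using pp_disj[OF pp] I1 I2 dI by blast
    thus ?thesis by blast
  qed
  have f2: "f \<notin> (\<Union>i\<in>I2. S i)" using f I2 by blast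
  have g1: "g \<notin> (\<Union>i\<in>I1. S i)" using g I1 by blast
  have "insert e (insert f (\<Union>i\<in>I1. S i)) \<inter> insert e (insert g (\<Union>i\<in>I2. S i)) = {e}"
    using d f2 g1 fg fe ge by blast
  thus False using orth P1 Q2 by (metis is_singletonI is_singleton_altdef)
qed


lemma ext_step:
  assumes echP: "echidna_wrt P t E S n" and echQ: "echidna_wrt Q t E S n"
    and orthPQ: "\<forall>C D. P C \<longrightarrow> Q D \<longrightarrow> card (C \<inter> D) \<noteq> 1"
    and propP: "\<forall>X. X \<subseteq> E \<and> card X = t \<longrightarrow> (\<exists>C. P C \<and> card C = 2*t \<and> X \<subseteq> C)"
    and propQ: "\<forall>X. X \<subseteq> E \<and> card X = t \<longrightarrow> (\<exists>D. Q D \<and> card D = 2*t \<and> X \<subseteq> D)"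
    and PE: "\<forall>C. P C \<longrightarrow> C \<subseteq> E" and QE: "\<forall>D. Q D \<longrightarrow> D \<subseteq> E" and finE: "finite E"
    and e: "e \<in> E" and eU: "e \<notin> (\<Union>i\<in>{1..n}. S i)" and nbig: "3*t - 2 \<le> n" and t: "t \<ge> 2"
  shows "\<exists>f. f \<in> E \<and> f \<noteq> e \<and> f \<notin> (\<Union>i\<in>{1..n}. S i) \<and>
    (\<forall>I. I \<subseteq> {1..n} \<and> card I = t - 1 \<longrightarrow>
       P (insert e (insert f (\<Union>i\<in>I. S i))) \<and> Q (insert e (insert f (\<Union>i\<in>I. S i))))"
proof -
  have pp: "pair_partition E S n" using echP unfolding echidna_wrt_def by blast
  define x where "x = (\<lambda>i. SOME a. a \<in> S i)"
  have xS: "\<And>i. i \<in> {1..n} \<Longrightarrow> x i \<in> S i" unfolding x_def using some_mem[OF pp] by blast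
  have orthQP: "\<forall>C D. Q C \<longrightarrow> P D \<longrightarrow> card (C \<inter> D) \<noteq> 1" using orthPQ by (metis Int_commute)
  have t1: "t \<ge> 1" using t by simp
  have xSI: "\<And>I. I \<subseteq> {1..n} \<Longrightarrow> \<forall>i\<in>I. x i \<in> S i" using xS by auto
  have XE: "\<And>I. I \<subseteq> {1..n} \<Longrightarrow> insert e (x ` I) \<subseteq> E"
  proof -
    fix I assume I: "I \<subseteq> {1..n}"
    have "\<And>i. i \<in> I \<Longrightarrow> x i \<in> E"
    proof -
      fix i assume i: "i \<in> I"
      hence "i \<in> {1..n}" using I by auto
      thus "x i \<in> E" using xS pp_fin[OF pp] by auto
    qed
    thus "insert e (x ` I) \<subseteq> E" using e by auto
  qed
  have cX: "\<And>I. I \<subseteq> {1..n} \<Longrightarrow> card I = t - 1 \<Longrightarrow> card (insert e (x ` I)) = t"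
  proof -
    fix I assume I: "I \<subseteq> {1..n}" "card I = t - 1"
    show "card (insert e (x ` I)) = t" by (rule cardX[OF pp I eU t1 xSI[OF I(1)]])
  qed
  have shP: "\<And>I. I \<subseteq> {1..n} \<Longrightarrow> card I = t - 1 \<Longrightarrow>
     \<exists>f. P (insert e (insert f (\<Union>i\<in>I. S i))) \<and> f \<noteq> e \<and> f \<notin> (\<Union>i\<in>{1..n}. S i) \<and> f \<in> E"
  proof -
    fix I assume I: "I \<subseteq> {1..n}" "card I = t - 1"
    obtain C where C: "P C" "card C = 2*t" "insert e (x ` I) \<subseteq> C"
      using propP XE[OF I(1)] cX[OF I] by blast
    have CE: "C \<subseteq> E" using PE C by blast
    have fC: "finite C" using CE finE finite_subset by blast
    obtain f where f: "C = insert e (insert f (\<Union>i\<in>I. S i))" "f \<noteq> e" "f \<notin> (\<Union>i\<in>{1..n}. S i)"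
      using shape[OF pp echQ orthPQ C(1) fC C(2) I eU C(3) xSI[OF I(1)] nbig t] by auto
    have "f \<in> E" using f(1) CE by blast
    thus "\<exists>f. P (insert e (insert f (\<Union>i\<in>I. S i))) \<and> f \<noteq> e \<and> f \<notin> (\<Union>i\<in>{1..n}. S i) \<and> f \<in> E"
      using f C by blast
  qed
  have shQ: "\<And>I. I \<subseteq> {1..n} \<Longrightarrow> card I = t - 1 \<Longrightarrow>
     \<exists>f. Q (insert e (insert f (\<Union>i\<in>I. S i))) \<and> f \<noteq> e \<and> f \<notin> (\<Union>i\<in>{1..n}. S i)"
  proof -
    fix I assume I: "I \<subseteq> {1..n}" "card I = t - 1"
    obtain C where C: "Q C" "card C = 2*t" "insert e (x ` I) \<subseteq> C"
      using propQ XE[OF I(1)] cX[OF I] by blast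
    have CE: "C \<subseteq> E" using QE C by blast
    have fC: "finite C" using CE finE finite_subset by blast
    obtain f where f: "C = insert e (insert f (\<Union>i\<in>I. S i))" "f \<noteq> e" "f \<notin> (\<Union>i\<in>{1..n}. S i)"
      using shape[OF pp echP orthQP C(1) fC C(2) I eU C(3) xSI[OF I(1)] nbig t] by auto
    thus "\<exists>f. Q (insert e (insert f (\<Union>i\<in>I. S i))) \<and> f \<noteq> e \<and> f \<notin> (\<Union>i\<in>{1..n}. S i)"
      using f C by blast
  qed
  define I0 where "I0 = {1..t-1}"
  have I0: "I0 \<subseteq> {1..n}" "card I0 = t - 1" unfolding I0_def using nbig t by auto
  obtain f0 where f0: "P (insert e (insert f0 (\<Union>i\<in>I0. S i)))" "f0 \<noteq> e"
      "f0 \<notin> (\<Union>i\<in>{1..n}. S i)" "f0 \<in> E"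
    using shP[OF I0] by blast
  have pick: "\<And>I. I \<subseteq> {1..n} \<Longrightarrow> card I = t - 1 \<Longrightarrow>
      \<exists>I2. I2 \<subseteq> {1..n} \<and> card I2 = t - 1 \<and> I \<inter> I2 = {} \<and> I0 \<inter> I2 = {}"
  proof -
    fix I assume I: "I \<subseteq> {1..n}" "card I = t - 1"
    have "card (I \<union> I0) \<le> 2 * (t - 1)" using card_Un_le[of I I0] I I0 by simp
    moreover have "card {1..n} - card (I \<union> I0) \<le> card ({1..n} - (I \<union> I0))"
      using diff_card_le_card_Diff[of "I \<union> I0" "{1..n}"] I I0 finite_subset by blast
    ultimately have "card ({1..n} - (I \<union> I0)) \<ge> t - 1" using nbig t by simp
    then obtain I2 where "I2 \<subseteq> {1..n} - (I \<union> I0)" "card I2 = t - 1"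
      by (meson obtain_subset_with_card_n)
    thus "\<exists>I2. I2 \<subseteq> {1..n} \<and> card I2 = t - 1 \<and> I \<inter> I2 = {} \<and> I0 \<inter> I2 = {}" by blast
  qed
  have Pall: "\<And>I. I \<subseteq> {1..n} \<Longrightarrow> card I = t - 1 \<Longrightarrow> P (insert e (insert f0 (\<Union>i\<in>I. S i)))"
  proof -
    fix I assume I: "I \<subseteq> {1..n}" "card I = t - 1"
    obtain fI where fI: "P (insert e (insert fI (\<Union>i\<in>I. S i)))" "fI \<noteq> e" "fI \<notin> (\<Union>i\<in>{1..n}. S i)"
      using shP[OF I] by blast
    obtain I2 where I2: "I2 \<subseteq> {1..n}" "card I2 = t - 1" "I \<inter> I2 = {}" "I0 \<inter> I2 = {}"
      using pick[OF I] by blast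
    obtain g where g: "Q (insert e (insert g (\<Union>i\<in>I2. S i)))" "g \<noteq> e" "g \<notin> (\<Union>i\<in>{1..n}. S i)"
      using shQ[OF I2(1,2)] by blast
    have "fI = g" using matching[OF pp orthPQ I(1) I2(1) I2(3) eU fI(3) g(3) fI(2) g(2) fI(1) g(1)] .
    moreover have "f0 = g" using matching[OF pp orthPQ I0(1) I2(1) I2(4) eU f0(3) g(3) f0(2) g(2) f0(1) g(1)] .
    ultimately show "P (insert e (insert f0 (\<Union>i\<in>I. S i)))" using fI by simp
  qed
  have Qall: "\<And>I. I \<subseteq> {1..n} \<Longrightarrow> card I = t - 1 \<Longrightarrow> Q (insert e (insert f0 (\<Union>i\<in>I. S i)))"
  proof -
    fix I assume I: "I \<subseteq> {1..n}" "card I = t - 1"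
    obtain gI where gI: "Q (insert e (insert gI (\<Union>i\<in>I. S i)))" "gI \<noteq> e" "gI \<notin> (\<Union>i\<in>{1..n}. S i)"
      using shQ[OF I] by blast
    obtain I2 where I2: "I2 \<subseteq> {1..n}" "card I2 = t - 1" "I \<inter> I2 = {}" "I0 \<inter> I2 = {}"
      using pick[OF I] by blast
    have d: "I2 \<inter> I = {}" using I2(3) by blast
    have "f0 = gI" using matching[OF pp orthPQ I2(1) I(1) d eU f0(3) gI(3) f0(2) gI(2) Pall[OF I2(1,2)] gI(1)] .
    thus "Q (insert e (insert f0 (\<Union>i\<in>I. S i)))" using gI by simp
  qed
  show ?thesis using f0 Pall Qall by blast
qed

lemma ext_ech:
  assumes ech: "echidna_wrt P t E S n" and ef: "e \<in> E" "f \<in> E" "e \<noteq> f"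
    and eU: "e \<notin> (\<Union>i\<in>{1..n}. S i)" and fU: "f \<notin> (\<Union>i\<in>{1..n}. S i)"
    and new: "\<forall>I. I \<subseteq> {1..n} \<and> card I = t - 1 \<longrightarrow> P (insert e (insert f (\<Union>i\<in>I. S i)))"
    and t: "t \<ge> 1"
  shows "echidna_wrt P t E (S(Suc n := {e,f})) (Suc n)"
proof -
  let ?S = "S(Suc n := {e,f})"
  have pp: "pair_partition E S n" using ech unfolding echidna_wrt_def by blast
  have A1: "\<forall>i\<in>{1..Suc n}. ?S i \<subseteq> E \<and> card (?S i) = 2"
  proof (intro ballI)
    fix i assume i: "i \<in> {1..Suc n}"
    show "?S i \<subseteq> E \<and> card (?S i) = 2"
    proof (cases "i = Suc n")
      case True thus ?thesis using ef by simp
    next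
      case False
      hence "i \<in> {1..n}" using i by auto
      thus ?thesis using pp_fin[OF pp] False by simp
    qed
  qed
  have A2: "\<forall>i\<in>{1..Suc n}. \<forall>j\<in>{1..Suc n}. i \<noteq> j \<longrightarrow> ?S i \<inter> ?S j = {}"
  proof (intro ballI impI)
    fix i j assume i: "i \<in> {1..Suc n}" and j: "j \<in> {1..Suc n}" and ij: "i \<noteq> j"
    show "?S i \<inter> ?S j = {}"
    proof (cases "i = Suc n")
      case True
      hence "j \<in> {1..n}" using j ij by auto
      thus ?thesis using True ij eU fU by auto
    next
      case False
      hence i': "i \<in> {1..n}" using i by auto
      show ?thesis
      proof (cases "j = Suc n")
        case True thus ?thesis using i' ij eU fU by auto
      next
        case False
        hence "j \<in> {1..n}" using j by auto
        thus ?thesis using pp_disj[OF pp i'] ij False \<open>i \<noteq> Suc n\<close> by simp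
      qed
    qed
  qed
  have pp': "pair_partition E ?S (Suc n)" unfolding pair_partition_def using A1 A2 by blast
  show ?thesis unfolding echidna_wrt_def
  proof (intro conjI pp' allI impI)
    fix I assume I: "I \<subseteq> {1..Suc n} \<and> card I = t"
    show "P (\<Union>i\<in>I. ?S i)"
    proof (cases "Suc n \<in> I")
      case False
      hence I': "I \<subseteq> {1..n}" using I by (auto simp: atLeastAtMostSuc_conv)
      have "(\<Union>i\<in>I. ?S i) = (\<Union>i\<in>I. S i)" by (rule SUP_cong[OF refl]) (use False in auto)
      thus ?thesis using ech I I' unfolding echidna_wrt_def by simp
    next
      case True
      let ?I = "I - {Suc n}"
      have I': "?I \<subseteq> {1..n}" using I by (auto simp: atLeastAtMostSuc_conv)
      have "finite I" using I finite_subset by blast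
      hence cI: "card ?I = t - 1" using I True by simp
      have "I = insert (Suc n) ?I" using True by blast
      hence "(\<Union>i\<in>I. ?S i) = {e,f} \<union> (\<Union>i\<in>?I. ?S i)" by (metis UN_insert fun_upd_same)
      also have "(\<Union>i\<in>?I. ?S i) = (\<Union>i\<in>?I. S i)" by (rule SUP_cong) auto
      finally have "(\<Union>i\<in>I. ?S i) = insert e (insert f (\<Union>i\<in>?I. S i))" by simp
      thus ?thesis using new I' cI by simp
    qed
  qed
qed

lemma cover:
  assumes orthPQ: "\<forall>C D. P C \<longrightarrow> Q D \<longrightarrow> card (C \<inter> D) \<noteq> 1"
    and propP: "\<forall>X. X \<subseteq> E \<and> card X = t \<longrightarrow> (\<exists>C. P C \<and> card C = 2*t \<and> X \<subseteq> C)"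
    and propQ: "\<forall>X. X \<subseteq> E \<and> card X = t \<longrightarrow> (\<exists>D. Q D \<and> card D = 2*t \<and> X \<subseteq> D)"
    and PE: "\<forall>C. P C \<longrightarrow> C \<subseteq> E" and QE: "\<forall>D. Q D \<longrightarrow> D \<subseteq> E" and finE: "finite E"
    and t: "t \<ge> 2"
  shows "echidna_wrt P t E S n \<Longrightarrow> echidna_wrt Q t E S n \<Longrightarrow> 4*t - 3 \<le> n \<Longrightarrow>
    \<exists>m S'. n \<le> m \<and> (\<forall>i\<in>{1..n}. S' i = S i) \<and> (\<Union>i\<in>{1..m}. S' i) = E \<and>
      echidna_wrt P t E S' m \<and> echidna_wrt Q t E S' m"
proof (induction "card (E - (\<Union>i\<in>{1..n}. S i))" arbitrary: n S rule: less_induct)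
  case less
  have pp: "pair_partition E S n" using less.prems(1) unfolding echidna_wrt_def by simp
  have UE: "(\<Union>i\<in>{1..n}. S i) \<subseteq> E"
  proof
    fix y assume "y \<in> (\<Union>i\<in>{1..n}. S i)"
    then obtain i where i: "i \<in> {1..n}" "y \<in> S i" by auto
    thus "y \<in> E" using pp_fin[OF pp i(1)] by auto
  qed
  show ?case
  proof (cases "E - (\<Union>i\<in>{1..n}. S i) = {}")
    case True
    hence "(\<Union>i\<in>{1..n}. S i) = E" using UE by auto
    hence "n \<le> n \<and> (\<forall>i\<in>{1..n}. S i = S i) \<and> (\<Union>i\<in>{1..n}. S i) = E \<and>
      echidna_wrt P t E S n \<and> echidna_wrt Q t E S n" using less.prems(1,2) by simp
    thus ?thesis by (intro exI)
  next
    case False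
    then obtain e where e: "e \<in> E" "e \<notin> (\<Union>i\<in>{1..n}. S i)" by auto
    have nb: "3*t - 2 \<le> n" using less.prems(3) t by simp
    have t1: "t \<ge> 1" using t by simp
    have "\<exists>f. f \<in> E \<and> f \<noteq> e \<and> f \<notin> (\<Union>i\<in>{1..n}. S i) \<and>
      (\<forall>I. I \<subseteq> {1..n} \<and> card I = t - 1 \<longrightarrow>
       P (insert e (insert f (\<Union>i\<in>I. S i))) \<and> Q (insert e (insert f (\<Union>i\<in>I. S i))))"
      by (rule ext_step[OF less.prems(1,2) orthPQ propP propQ PE QE finE e nb t])
    then obtain f where f: "f \<in> E" "f \<noteq> e" "f \<notin> (\<Union>i\<in>{1..n}. S i)"
      and new: "\<forall>I. I \<subseteq> {1..n} \<and> card I = t - 1 \<longrightarrow>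
       P (insert e (insert f (\<Union>i\<in>I. S i))) \<and> Q (insert e (insert f (\<Union>i\<in>I. S i)))"
      by (elim exE conjE)
    have newP: "\<forall>I. I \<subseteq> {1..n} \<and> card I = t - 1 \<longrightarrow> P (insert e (insert f (\<Union>i\<in>I. S i)))"
      using new by simp
    have newQ: "\<forall>I. I \<subseteq> {1..n} \<and> card I = t - 1 \<longrightarrow> Q (insert e (insert f (\<Union>i\<in>I. S i)))"
      using new by simp
    have ef: "e \<noteq> f" using f(2) by simp
    let ?S = "S(Suc n := {e,f})"
    have eP: "echidna_wrt P t E ?S (Suc n)"
      by (rule ext_ech[OF less.prems(1) e(1) f(1) ef e(2) f(3) newP t1])
    have eQ: "echidna_wrt Q t E ?S (Suc n)"
      by (rule ext_ech[OF less.prems(2) e(1) f(1) ef e(2) f(3) newQ t1])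
    have Ueq: "(\<Union>i\<in>{1..Suc n}. ?S i) = insert e (insert f (\<Union>i\<in>{1..n}. S i))"
    proof -
      have eq1: "{1..Suc n} = insert (Suc n) {1..n}" by auto
      have "(\<Union>i\<in>{1..Suc n}. ?S i) = ?S (Suc n) \<union> (\<Union>i\<in>{1..n}. ?S i)" unfolding eq1 by (rule UN_insert)
      also have "?S (Suc n) = {e,f}" by simp
      also have "(\<Union>i\<in>{1..n}. ?S i) = (\<Union>i\<in>{1..n}. S i)" by (rule SUP_cong[OF refl]) auto
      finally show ?thesis by simp
    qed
    have ps: "E - (\<Union>i\<in>{1..Suc n}. ?S i) \<subset> E - (\<Union>i\<in>{1..n}. S i)"
      unfolding Ueq using e by auto
    have fin2: "finite (E - (\<Union>i\<in>{1..n}. S i))" using finE by simp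
    have lt: "card (E - (\<Union>i\<in>{1..Suc n}. ?S i)) < card (E - (\<Union>i\<in>{1..n}. S i))"
      by (rule psubset_card_mono[OF fin2 ps])
    have n4: "4*t - 3 \<le> Suc n" using less.prems(3) by simp
    have "\<exists>m S'. Suc n \<le> m \<and> (\<forall>i\<in>{1..Suc n}. S' i = ?S i) \<and> (\<Union>i\<in>{1..m}. S' i) = E \<and>
      echidna_wrt P t E S' m \<and> echidna_wrt Q t E S' m"
      by (rule less.hyps[OF lt eP eQ n4])
    then obtain m S' where m: "Suc n \<le> m" "\<forall>i\<in>{1..Suc n}. S' i = ?S i" "(\<Union>i\<in>{1..m}. S' i) = E"
        "echidna_wrt P t E S' m" "echidna_wrt Q t E S' m"
      by (elim exE conjE)
    have "\<forall>i\<in>{1..n}. S' i = S i"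
    proof
      fix i assume i: "i \<in> {1..n}"
      hence "i \<in> {1..Suc n}" "i \<noteq> Suc n" by auto
      thus "S' i = S i" using m(2) by simp
    qed
    moreover have "n \<le> m" using m(1) by simp
    ultimately have "n \<le> m \<and> (\<forall>i\<in>{1..n}. S' i = S i) \<and> (\<Union>i\<in>{1..m}. S' i) = E \<and>
      echidna_wrt P t E S' m \<and> echidna_wrt Q t E S' m" using m(3,4,5) by simp
    thus ?thesis by (intro exI)
  qed
qed

theorem lemma4p5:
  fixes t n :: nat and E :: "'a set" and indep :: "'a set \<Rightarrow> bool" and S :: "nat \<Rightarrow> 'a set"
  assumes "t \<ge> 2"
    and "matroid E indep"
    and "t2t_property t E indep"
    and "echidna t E indep S n"
    and "n \<ge> 4 * t - 3"
  shows "\<exists>m S'. m \<ge> n \<and> (\<forall>i \<in> {1..n}. S' i = S i) \<and>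
           (\<Union>i\<in>{1..m}. S' i) = E \<and>
           echidna t E indep S' m \<and> coechidna t E indep S' m"
proof -
  let ?P = "circuit E indep"
  let ?Q = "circuit E (dual_indep E indep)"
  have finE: "finite E" using assms(2) unfolding matroid_def by blast
  have orthPQ: "\<forall>C D. ?P C \<longrightarrow> ?Q D \<longrightarrow> card (C \<inter> D) \<noteq> 1" using orth[OF assms(2)] by blast
  have orthQP: "\<forall>C D. ?Q C \<longrightarrow> ?P D \<longrightarrow> card (C \<inter> D) \<noteq> 1" using orthPQ by (metis Int_commute)
  have propP: "\<forall>X. X \<subseteq> E \<and> card X = t \<longrightarrow> (\<exists>C. ?P C \<and> card C = 2*t \<and> X \<subseteq> C)"
    using assms(3) unfolding t2t_property_def by blast
  have propQ: "\<forall>X. X \<subseteq> E \<and> card X = t \<longrightarrow> (\<exists>D. ?Q D \<and> card D = 2*t \<and> X \<subseteq> D)"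
    using assms(3) unfolding t2t_property_def cocircuit_def by blast
  have PE: "\<forall>C. ?P C \<longrightarrow> C \<subseteq> E" unfolding circuit_def by blast
  have QE: "\<forall>D. ?Q D \<longrightarrow> D \<subseteq> E" unfolding circuit_def by blast
  have Qfin: "\<forall>D. ?Q D \<longrightarrow> finite D" using QE finE finite_subset by blast
  have eP: "echidna_wrt ?P t E S n" using assms(4) unfolding echidna_def by simp
  have eQ: "echidna_wrt ?Q t E S n"
    using step1[OF eP orthQP propQ Qfin] assms(1,5) by simp
  obtain m S' where m: "n \<le> m" "\<forall>i\<in>{1..n}. S' i = S i" "(\<Union>i\<in>{1..m}. S' i) = E"
      "echidna_wrt ?P t E S' m" "echidna_wrt ?Q t E S' m"
    using cover[OF orthPQ propP propQ PE QE finE assms(1) eP eQ assms(5)] by blast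
  show ?thesis unfolding echidna_def coechidna_def using m by blast
qed

end
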